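(* Let $k\ge1$, $i\in\{1,\dots,k\}$, and let $s_i^k$ be the $i$-th row of $G_k^\alpha$. For every $j\in\{0,1,\dots,s-1\}$, the vector $\gamma^js_i^k$ contains every element of the ideal $\langle\gamma^j\rangle$ exactly $q^{j+s(k-1)}$ times among its coordinates.
   Context: Let $R$ be a finite commutative chain ring with maximal ideal $\langle\gamma\rangle$, nilpotency index $s$ (least $s$ with $\gamma^s=0$) and residue field $R/\langle\gamma\rangle\cong\mathbb{F}_q$. Fix coset representatives $T=\{e_0,\dots,e_{q-1}\}$ with $e_0=0,e_1=1$, ordered $e_0<\dots<e_{q-1}$; each $r\in R$ is uniquely $\sum_{i=0}^{s-1}r_i\gamma^i$, $r_i\in T$; order $R$ by $x>y$ iff $x_i>y_i$ in $T$ for the largest $i$ with $x_i\neq y_i$; list $R=\{\rho_0,\dots,\rho_{q^s-1}\}$ increasingly. $\mathbf{a}^{(m)}$ is the constant vector of length $m$. Define $G_1^\alpha=(\rho_0\ \cdots\ \rho_{q^s-1})$ and, for $k>1$, $G_k^\alpha$ as the $k\times q^{sk}$ matrix of $q^s$ column blocks, the $j$-th having first row $\boldsymbol{\rho_j}^{(q^{s(k-1)})}$ and $G_{k-1}^\alpha$ below. *)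

theory Defs
  imports Main
begin

definition is_ideal :: "'a::comm_ring_1 set \<Rightarrow> bool" where
  "is_ideal I \<longleftrightarrow> 0 \<in> I \<and> (\<forall>x\<in>I. \<forall>y\<in>I. x + y \<in> I) \<and> (\<forall>r. \<forall>x\<in>I. r * x \<in> I)"

definition pideal :: "'a::comm_ring_1 \<Rightarrow> 'a set" where
  "pideal a = range (\<lambda>y. a * y)"

definition chain_ring :: "'a::comm_ring_1 itself \<Rightarrow> bool" where
  "chain_ring _ \<longleftrightarrow> (\<forall>I J :: 'a set. is_ideal I \<longrightarrow> is_ideal J \<longrightarrow> I \<subseteq> J \<or> J \<subseteq> I)"

definition maximal_ideal :: "'a::comm_ring_1 set \<Rightarrow> bool" where
  "maximal_ideal M \<longleftrightarrow> is_ideal M \<and> M \<noteq> UNIV \<and>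
     (\<forall>J. is_ideal J \<longrightarrow> M \<subseteq> J \<longrightarrow> J = M \<or> J = UNIV)"

definition digits :: "'a::comm_ring_1 set \<Rightarrow> 'a \<Rightarrow> nat \<Rightarrow> 'a \<Rightarrow> 'a list" where
  "digits T \<gamma> s r = (THE ds. length ds = s \<and> set ds \<subseteq> T \<and> r = (\<Sum>i<s. ds ! i * \<gamma> ^ i))"

definition T_less :: "(nat \<Rightarrow> 'a) \<Rightarrow> nat \<Rightarrow> 'a \<Rightarrow> 'a \<Rightarrow> bool" where
  "T_less e q a b \<longleftrightarrow> (\<exists>m n. m < n \<and> n < q \<and> a = e m \<and> b = e n)"

definition R_less :: "(nat \<Rightarrow> 'a::comm_ring_1) \<Rightarrow> nat \<Rightarrow> 'a \<Rightarrow> nat \<Rightarrow> 'a \<Rightarrow> 'a \<Rightarrow> bool" where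
  "R_less e q \<gamma> s y x \<longleftrightarrow>
     (let dx = digits (e ` {..<q}) \<gamma> s x; dy = digits (e ` {..<q}) \<gamma> s y in
      \<exists>i<s. dx ! i \<noteq> dy ! i \<and> T_less e q (dy ! i) (dx ! i) \<and>
            (\<forall>l. i < l \<and> l < s \<longrightarrow> dx ! l = dy ! l))"

text \<open>rho_j: the j-th element of R in increasing order (exactly j elements below it).\<close>
definition rho :: "(nat \<Rightarrow> 'a::{comm_ring_1,finite}) \<Rightarrow> nat \<Rightarrow> 'a \<Rightarrow> nat \<Rightarrow> nat \<Rightarrow> 'a" where
  "rho e q \<gamma> s j = (THE x. card {y. R_less e q \<gamma> s y x} = j)"

text \<open>Entries of G_k^alpha: Gmat rh N k r c is the entry in row r (1 \<le> r \<le> k) and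
  column c (c < N^k) of G_k, where rh enumerates R and N = |R| = q^s.
  G_1 = (rho_0 ... rho_{N-1}); G_k consists of N column blocks of width N^(k-1),
  the j-th having first row rho_j repeated and G_{k-1} below.\<close>
fun Gmat :: "(nat \<Rightarrow> 'a) \<Rightarrow> nat \<Rightarrow> nat \<Rightarrow> nat \<Rightarrow> nat \<Rightarrow> 'a" where
  "Gmat rh N 0 r c = undefined"
| "Gmat rh N (Suc k) r c =
     (if k = 0 then rh c
      else if r = 1 then rh (c div N ^ k)
      else Gmat rh N k (r - 1) (c mod N ^ k))"

end

theory Submission imports Defs begin

lemma pideal_ideal: "is_ideal (pideal (a::'a::comm_ring_1))"
  unfolding is_ideal_def pideal_def
proof (intro conjI ballI allI)
  show "0 \<in> range ((*) a)" by (metis mult_zero_right rangeI)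
  fix x y assume "x \<in> range ((*) a)" "y \<in> range ((*) a)"
  then obtain u v where "x = a * u" "y = a * v" by auto
  then show "x + y \<in> range ((*) a)" by (metis distrib_left rangeI)
next
  fix r x assume "x \<in> range ((*) a)"
  then obtain u where "x = a * u" by auto
  then show "r * x \<in> range ((*) a)" by (metis mult.left_commute rangeI)
qed

lemma card_divmod:
  assumes M: "(M::nat) > 0"
  shows "card {c. c < N * M \<and> Q (c div M) (c mod M)} = card {(a,b). a < N \<and> b < M \<and> Q a b}"
proof -
  have "bij_betw (\<lambda>c. (c div M, c mod M)) {c. c < N * M \<and> Q (c div M) (c mod M)} {(a,b). a < N \<and> b < M \<and> Q a b}"
  proof (rule bij_betw_byWitness[where f' = "\<lambda>(a,b). a * M + b"])
    show "\<forall>a\<in>{c. c < N * M \<and> Q (c div M) (c mod M)}. (\<lambda>(a, b). a * M + b) (a div M, a mod M) = a"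
      by simp
    show "\<forall>a'\<in>{(a, b). a < N \<and> b < M \<and> Q a b}. (\<lambda>c. (c div M, c mod M)) ((\<lambda>(a, b). a * M + b) a') = a'"
      using M by auto
    show "(\<lambda>c. (c div M, c mod M)) ` {c. c < N * M \<and> Q (c div M) (c mod M)} \<subseteq> {(a, b). a < N \<and> b < M \<and> Q a b}"
      using M by (auto simp: less_mult_imp_div_less)
    show "(\<lambda>(a, b). a * M + b) ` {(a, b). a < N \<and> b < M \<and> Q a b} \<subseteq> {c. c < N * M \<and> Q (c div M) (c mod M)}"
    proof safe
      fix a b assume ab: "a < N" "b < M" "Q a b"
      have "a * M + b < (a+1) * M" using ab by simp
      also have "\<dots> \<le> N * M" using ab by (intro mult_right_mono) auto
      finally show "a * M + b < N * M" .
      show "Q ((a * M + b) div M) ((a * M + b) mod M)" using ab M by simp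
    qed
  qed
  thus ?thesis by (rule bij_betw_same_card)
qed

lemma Gmat_count:
  assumes N: "(N::nat) > 0"
  shows "1 \<le> k \<Longrightarrow> 1 \<le> i \<Longrightarrow> i \<le> k \<Longrightarrow>
    card {c. c < N ^ k \<and> P (Gmat rh N k i c)} = N ^ (k - 1) * card {m. m < N \<and> P (rh m)}"
proof (induction k arbitrary: i)
  case 0 then show ?case by simp
next
  case (Suc k)
  show ?case
  proof (cases "k = 0")
    case True then show ?thesis by simp
  next
    case False
    have M: "N ^ k > 0" using N by simp
    show ?thesis
    proof (cases "i = 1")
      case True
      have "{c. c < N ^ Suc k \<and> P (Gmat rh N (Suc k) i c)} = {c. c < N * N^k \<and> (\<lambda>a b. P (rh a)) (c div N^k) (c mod N^k)}"
        using False True by auto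
      also have "card \<dots> = card ({m. m < N \<and> P (rh m)} \<times> {..<N^k})"
        by (subst card_divmod[OF M]) (rule arg_cong[where f=card], auto)
      finally show ?thesis by (simp add: card_cartesian_product)
    next
      case i1: False
      have "{c. c < N ^ Suc k \<and> P (Gmat rh N (Suc k) i c)} = {c. c < N * N^k \<and> (\<lambda>a b. P (Gmat rh N k (i - 1) b)) (c div N^k) (c mod N^k)}"
        using False i1 by auto
      also have "card \<dots> = card ({..<N} \<times> {c. c < N ^ k \<and> P (Gmat rh N k (i - 1) c)})"
        by (subst card_divmod[OF M]) (rule arg_cong[where f=card], auto)
      also have "\<dots> = N * (N ^ (k - 1) * card {m. m < N \<and> P (rh m)})"
        using Suc.IH[of "i - 1"] Suc.prems False i1 by (simp add: card_cartesian_product)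
      finally show ?thesis using False by (simp add: power_eq_if)
    qed
  qed
qed

locale cr =
  fixes \<gamma> :: "'a::{comm_ring_1,finite}" and s q :: nat and e :: "nat \<Rightarrow> 'a"
  assumes chain: "chain_ring TYPE('a)"
    and maxl: "maximal_ideal (pideal \<gamma>)"
    and nilp1: "\<gamma> ^ s = 0" and nilp2: "\<forall>t<s. \<gamma> ^ t \<noteq> 0"
    and e_inj: "inj_on e {..<q}"
    and reps: "\<forall>x. \<exists>!t. t \<in> e ` {..<q} \<and> x - t \<in> pideal \<gamma>"
    and e0: "e 0 = 0"
begin

abbreviation T where "T \<equiv> e ` {..<q}"

lemma q_pos: "q > 0"
  using reps by (metis empty_iff image_empty lessThan_0 neq0_conv)

lemma zero_T: "0 \<in> T" using q_pos e0 by force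

lemma card_T: "card T = q" using e_inj by (simp add: card_image)

lemma unit: assumes "u \<notin> pideal \<gamma>" shows "\<exists>v. u * v = 1"
proof -
  have uu: "u \<in> pideal u" unfolding pideal_def by (metis mult_1_right rangeI)
  from chain have "pideal u \<subseteq> pideal \<gamma> \<or> pideal \<gamma> \<subseteq> pideal u"
    unfolding chain_ring_def using pideal_ideal by blast
  then have "pideal \<gamma> \<subseteq> pideal u" using uu assms by blast
  then have "pideal u = pideal \<gamma> \<or> pideal u = UNIV"
    using maxl pideal_ideal unfolding maximal_ideal_def by blast
  then have "pideal u = UNIV" using uu assms by blast
  then have "1 \<in> pideal u" by simp
  then show ?thesis unfolding pideal_def by (metis imageE)
qed

lemma rep_uniq: assumes "a \<in> T" "b \<in> T" "a - b \<in> pideal \<gamma>" shows "a = b"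
proof -
  have "0 \<in> pideal \<gamma>" unfolding pideal_def by (metis mult_zero_right rangeI)
  then have ha: "a \<in> T \<and> a - a \<in> pideal \<gamma>" using assms(1) by simp
  have hb: "b \<in> T \<and> a - b \<in> pideal \<gamma>" using assms by simp
  from reps have "\<exists>!t. t \<in> T \<and> a - t \<in> pideal \<gamma>" by blast
  then show ?thesis using ha hb by (metis (no_types, lifting))
qed

lemma T_pideal: "a \<in> T \<Longrightarrow> a \<in> pideal \<gamma> \<Longrightarrow> a = 0"
  using rep_uniq[of a 0] zero_T by simp

lemma U: "m + j \<le> s \<Longrightarrow> \<forall>i<m. a i \<in> pideal \<gamma> \<longrightarrow> a i = 0 \<Longrightarrow>
   (\<Sum>i<m. a i * \<gamma>^(i+j)) = 0 \<Longrightarrow> \<forall>i<m. a i = 0"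
proof (induction m arbitrary: a j)
  case 0 then show ?case by simp
next
  case (Suc m)
  define W where "W = (\<Sum>i<m. a (Suc i) * \<gamma>^i)"
  have "(\<Sum>i<m. a (Suc i) * \<gamma>^(Suc i+j)) = (\<Sum>i<m. \<gamma>^j * (\<gamma> * (a (Suc i) * \<gamma>^i)))"
    by (rule sum.cong) (simp_all add: power_add mult_ac)
  also have "\<dots> = \<gamma>^j * (\<gamma> * W)" unfolding W_def by (simp add: sum_distrib_left)
  finally have sum: "(\<Sum>i<Suc m. a i * \<gamma>^(i+j)) = \<gamma>^j * (a 0 + \<gamma> * W)"
    unfolding sum.lessThan_Suc_shift by (simp add: distrib_left mult.commute)
  have a0: "a 0 = 0"
  proof (rule ccontr)
    assume "a 0 \<noteq> 0"
    then have n0: "a 0 \<notin> pideal \<gamma>" using Suc.prems(2) by blast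
    have "a 0 + \<gamma> * W \<notin> pideal \<gamma>"
    proof
      assume "a 0 + \<gamma> * W \<in> pideal \<gamma>"
      then obtain y where "a 0 + \<gamma> * W = \<gamma> * y" unfolding pideal_def by blast
      then have "a 0 = \<gamma> * (y - W)" by (metis add_diff_cancel right_diff_distrib)
      then show False using n0 unfolding pideal_def by blast
    qed
    then obtain v where v: "(a 0 + \<gamma> * W) * v = 1" using unit by blast
    have "\<gamma>^j = \<gamma>^j * ((a 0 + \<gamma> * W) * v)" using v by simp
    also have "\<dots> = (\<gamma>^j * (a 0 + \<gamma> * W)) * v" by (rule mult.assoc[symmetric])
    also have "\<dots> = 0" using sum Suc.prems(3) by simp
    finally have "\<gamma>^j = 0" .
    moreover have "j < s" using Suc.prems(1) by simp
    ultimately show False using nilp2 by blast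
  qed
  have "(\<Sum>i<m. a (Suc i) * \<gamma>^(i + Suc j)) = 0"
    using Suc.prems(3) a0 unfolding sum.lessThan_Suc_shift by simp
  moreover have "m + Suc j \<le> s" using Suc.prems(1) by simp
  moreover have "\<forall>i<m. a (Suc i) \<in> pideal \<gamma> \<longrightarrow> a (Suc i) = 0" using Suc.prems(2) by simp
  ultimately have "\<forall>i<m. a (Suc i) = 0"
    using Suc.IH[of "Suc j" "\<lambda>i. a (Suc i)"] by blast
  then show ?case using a0 by (auto simp: less_Suc_eq_0_disj)
qed

lemma ex_digits: "\<forall>r. \<exists>ds. length ds = n \<and> set ds \<subseteq> T \<and> r - (\<Sum>i<n. ds!i * \<gamma>^i) \<in> pideal (\<gamma>^n)"
proof (induction n)
  case 0
  show ?case
  proof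
    fix r
    have "r - (\<Sum>i<0. []!i * \<gamma>^i) = \<gamma>^0 * r" by simp
    then show "\<exists>ds. length ds = 0 \<and> set ds \<subseteq> T \<and> r - (\<Sum>i<0. ds!i * \<gamma>^i) \<in> pideal (\<gamma>^0)"
      unfolding pideal_def by (metis empty_subsetI list.size(3) rangeI set_empty)
  qed
next
  case (Suc n)
  show ?case
  proof
    fix r
    obtain t where t: "t \<in> T" "r - t \<in> pideal \<gamma>" using reps by blast
    then obtain r' where r': "r - t = \<gamma> * r'" unfolding pideal_def by blast
    obtain ds where ds: "length ds = n" "set ds \<subseteq> T" "r' - (\<Sum>i<n. ds!i * \<gamma>^i) \<in> pideal (\<gamma>^n)"
      using Suc.IH by blast
    obtain y where y: "r' - (\<Sum>i<n. ds!i * \<gamma>^i) = \<gamma>^n * y" using ds(3) unfolding pideal_def by blast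
    have e1: "(\<Sum>i<Suc n. (t#ds)!i * \<gamma>^i) = t + \<gamma> * (\<Sum>i<n. ds!i * \<gamma>^i)"
      unfolding sum.lessThan_Suc_shift by (simp add: sum_distrib_left mult_ac)
    have "r - (\<Sum>i<Suc n. (t#ds)!i * \<gamma>^i) = (r - t) - \<gamma> * (\<Sum>i<n. ds!i * \<gamma>^i)"
      unfolding e1 by (simp add: diff_diff_add)
    also have "\<dots> = \<gamma> * (r' - (\<Sum>i<n. ds!i * \<gamma>^i))" unfolding r' by (simp add: right_diff_distrib)
    also have "\<dots> = \<gamma>^(Suc n) * y" unfolding y by (simp add: mult.assoc)
    finally have "r - (\<Sum>i<Suc n. (t#ds)!i * \<gamma>^i) \<in> pideal (\<gamma>^Suc n)" unfolding pideal_def by blast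
    moreover have "length (t#ds) = Suc n" "set (t#ds) \<subseteq> T" using ds t by auto
    ultimately show "\<exists>ds. length ds = Suc n \<and> set ds \<subseteq> T \<and> r - (\<Sum>i<Suc n. ds!i * \<gamma>^i) \<in> pideal (\<gamma>^Suc n)"
      by blast
  qed
qed

definition evl :: "'a list \<Rightarrow> 'a" where "evl ds = (\<Sum>i<s. ds!i * \<gamma>^i)"

definition L :: "nat \<Rightarrow> 'a list set" where "L n = {ds. set ds \<subseteq> T \<and> length ds = n}"

lemma card_L: "card (L n) = q ^ n"
  unfolding L_def using card_lists_length_eq[of T n] card_T by simp

lemma evl_inj: "ds \<in> L s \<Longrightarrow> ds' \<in> L s \<Longrightarrow> evl ds = evl ds' \<Longrightarrow> ds = ds'"
proof -
  assume a: "ds \<in> L s" "ds' \<in> L s" "evl ds = evl ds'"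
  have "(\<Sum>i<s. (ds!i - ds'!i) * \<gamma>^(i+0)) = evl ds - evl ds'"
    unfolding evl_def by (simp add: left_diff_distrib sum_subtractf)
  then have s0: "(\<Sum>i<s. (ds!i - ds'!i) * \<gamma>^(i+0)) = 0" using a(3) by simp
  have "\<forall>i<s. (ds!i - ds'!i) \<in> pideal \<gamma> \<longrightarrow> ds!i - ds'!i = 0"
  proof (intro allI impI)
    fix i assume i: "i < s" "ds!i - ds'!i \<in> pideal \<gamma>"
    have "ds!i \<in> set ds" "ds'!i \<in> set ds'" using a(1,2) i(1) unfolding L_def by simp_all
    then have "ds!i \<in> T" "ds'!i \<in> T" using a(1,2) unfolding L_def by blast+
    then show "ds!i - ds'!i = 0" using rep_uniq i(2) by simp
  qed
  then have "\<forall>i<s. ds!i - ds'!i = 0" using U[of s 0 "\<lambda>i. ds!i - ds'!i", OF _ _ s0] by simp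
  then show ?thesis using a(1,2) unfolding L_def by (simp add: nth_equalityI)
qed

lemma evl_surj: "\<exists>ds\<in>L s. evl ds = r"
proof -
  obtain ds where ds: "length ds = s" "set ds \<subseteq> T" "r - (\<Sum>i<s. ds!i * \<gamma>^i) \<in> pideal (\<gamma>^s)"
    using ex_digits by blast
  then have "r - evl ds = 0" unfolding evl_def pideal_def using nilp1 by auto
  then show ?thesis using ds unfolding L_def by auto
qed

lemma evl_bij: "bij_betw evl (L s) UNIV"
proof -
  have "inj_on evl (L s)" by (rule inj_onI) (rule evl_inj)
  moreover have "x \<in> evl ` L s" for x
  proof -
    obtain ds where "ds \<in> L s" "evl ds = x" using evl_surj[of x] by blast
    then show ?thesis by blast
  qed
  ultimately show ?thesis unfolding bij_betw_def by blast
qed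

lemma card_UNIV: "card (UNIV :: 'a set) = q ^ s"
  using bij_betw_same_card[OF evl_bij] card_L by simp

abbreviation D where "D \<equiv> digits T \<gamma> s"

lemma D_props: "D r \<in> L s \<and> evl (D r) = r"
proof -
  obtain ds where ds: "ds \<in> L s" "evl ds = r" using evl_surj by blast
  have "\<exists>!ds. length ds = s \<and> set ds \<subseteq> T \<and> r = (\<Sum>i<s. ds ! i * \<gamma> ^ i)"
  proof (rule ex1I[of _ ds])
    show "length ds = s \<and> set ds \<subseteq> T \<and> r = (\<Sum>i<s. ds ! i * \<gamma> ^ i)" using ds unfolding L_def evl_def by auto
    fix ds' assume "length ds' = s \<and> set ds' \<subseteq> T \<and> r = (\<Sum>i<s. ds' ! i * \<gamma> ^ i)"
    then have "ds' \<in> L s" "evl ds' = r" unfolding L_def evl_def by auto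
    then show "ds' = ds" using evl_inj ds by blast
  qed
  then have "length (D r) = s \<and> set (D r) \<subseteq> T \<and> r = (\<Sum>i<s. D r ! i * \<gamma> ^ i)"
    unfolding digits_def by (rule theI')
  then show ?thesis unfolding L_def evl_def by simp
qed


abbreviation TL where "TL \<equiv> T_less e q"
abbreviation RL where "RL \<equiv> R_less e q \<gamma> s"

lemma R_less_iff: "RL y x \<longleftrightarrow> (\<exists>i<s. D x!i \<noteq> D y!i \<and> TL (D y!i) (D x!i) \<and> (\<forall>l. i < l \<and> l < s \<longrightarrow> D x!l = D y!l))"
  by (simp add: R_less_def Let_def)

lemma T_less_T: "TL a b \<Longrightarrow> a \<noteq> b"
  unfolding T_less_def using e_inj by (auto dest: inj_onD)

lemma T_less_trans: assumes "TL a b" "TL b c" shows "TL a c"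
proof -
  obtain m n where mn: "m < n" "n < q" "a = e m" "b = e n" using assms(1) unfolding T_less_def by blast
  obtain m' n' where mn': "m' < n'" "n' < q" "b = e m'" "c = e n'" using assms(2) unfolding T_less_def by blast
  have "n = m'" using e_inj mn mn' by (auto dest: inj_onD)
  then show ?thesis unfolding T_less_def using mn mn' by (intro exI[of _ m] exI[of _ n']) simp
qed

lemma T_less_total: assumes "a \<in> T" "b \<in> T" "a \<noteq> b" shows "TL a b \<or> TL b a"
proof -
  obtain m n where "m < q" "n < q" "a = e m" "b = e n" using assms(1,2) by blast
  moreover have "m \<noteq> n" using assms(3) calculation by blast
  ultimately show ?thesis unfolding T_less_def by (metis linorder_neqE_nat)
qed

lemma R_irrefl: "\<not> RL y y" unfolding R_less_iff by blast

lemma R_trans: assumes "RL z y" "RL y x" shows "RL z x"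
proof -
  obtain i1 where h1: "i1<s" "D x!i1 \<noteq> D y!i1" "TL (D y!i1) (D x!i1)" "\<forall>l. i1<l \<and> l<s \<longrightarrow> D x!l = D y!l"
    using assms(2) unfolding R_less_iff by blast
  obtain i2 where h2: "i2<s" "D y!i2 \<noteq> D z!i2" "TL (D z!i2) (D y!i2)" "\<forall>l. i2<l \<and> l<s \<longrightarrow> D y!l = D z!l"
    using assms(1) unfolding R_less_iff by blast
  consider "i1 < i2" | "i1 = i2" | "i2 < i1" by linarith
  then show ?thesis
  proof cases
    case 1
    have t: "TL (D z!i2) (D x!i2)" using h1(4) h2 1 by simp
    have ab: "\<forall>l. i2 < l \<and> l < s \<longrightarrow> D x!l = D z!l" using h1(4) h2(4) 1 by simp
    have ne: "D x!i2 \<noteq> D z!i2" using T_less_T[OF t] by metis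
    show ?thesis unfolding R_less_iff using h2(1) t ab ne by blast
  next
    case 2
    have t: "TL (D z!i2) (D x!i2)" using h1 h2 2 T_less_trans by blast
    have ab: "\<forall>l. i2 < l \<and> l < s \<longrightarrow> D x!l = D z!l" using h1(4) h2(4) 2 by simp
    have ne: "D x!i2 \<noteq> D z!i2" using T_less_T[OF t] by metis
    show ?thesis unfolding R_less_iff using h2(1) t ab ne by blast
  next
    case 3
    have t: "TL (D z!i1) (D x!i1)" using h1 h2(4) 3 by simp
    have ab: "\<forall>l. i1 < l \<and> l < s \<longrightarrow> D x!l = D z!l" using h1(4) h2(4) 3 by simp
    have ne: "D x!i1 \<noteq> D z!i1" using T_less_T[OF t] by metis
    show ?thesis unfolding R_less_iff using h1(1) t ab ne by blast
  qed
qed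

lemma R_total: assumes "x \<noteq> y" shows "RL x y \<or> RL y x"
proof -
  have Lx: "length (D x) = s" "set (D x) \<subseteq> T" and Ly: "length (D y) = s" "set (D y) \<subseteq> T"
    using D_props[of x] D_props[of y] unfolding L_def by auto
  have "D x \<noteq> D y" using D_props[of x] D_props[of y] assms by metis
  define S where "S = {l. l < s \<and> D x!l \<noteq> D y!l}"
  have "S \<noteq> {}"
  proof
    assume "S = {}"
    then have "D x = D y" using Lx Ly unfolding S_def by (auto intro: nth_equalityI)
    then show False using \<open>D x \<noteq> D y\<close> by simp
  qed
  moreover have fS: "finite S" unfolding S_def by simp
  ultimately have iS: "Max S \<in> S" by (rule Max_in[rotated])
  define i where "i = Max S"
  have above: "\<forall>l. i < l \<and> l < s \<longrightarrow> D x!l = D y!l"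
  proof (intro allI impI)
    fix l assume l: "i < l \<and> l < s"
    show "D x!l = D y!l"
    proof (rule ccontr)
      assume "D x!l \<noteq> D y!l"
      then have "l \<in> S" using l unfolding S_def by simp
      then have "l \<le> i" unfolding i_def using fS by simp
      then show False using l by simp
    qed
  qed
  have i: "i < s" "D x!i \<noteq> D y!i" using iS unfolding S_def i_def by auto
  have "D x!i \<in> T" "D y!i \<in> T" using i(1) Lx Ly nth_mem by (metis subsetD)+
  then have "TL (D x!i) (D y!i) \<or> TL (D y!i) (D x!i)" using T_less_total i(2) by blast
  then show ?thesis
  proof
    assume "TL (D x!i) (D y!i)"
    then have "RL x y" unfolding R_less_iff using i above by (intro exI[of _ i]) auto
    then show ?thesis by simp
  next
    assume "TL (D y!i) (D x!i)"
    then have "RL y x" unfolding R_less_iff using i above by (intro exI[of _ i]) auto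
    then show ?thesis by simp
  qed
qed

definition rank :: "'a \<Rightarrow> nat" where "rank x = card {y. RL y x}"

lemma rank_mono: assumes "RL x y" shows "rank x < rank y"
proof -
  have "{z. RL z x} \<subset> {z. RL z y}"
    using assms R_trans R_irrefl by blast
  then show ?thesis unfolding rank_def by (simp add: psubset_card_mono)
qed

lemma rank_inj: "inj rank"
proof (rule injI)
  fix x y assume "rank x = rank y"
  then show "x = y" using R_total rank_mono by (metis less_irrefl)
qed

lemma rank_lt: "rank x < q ^ s"
proof -
  have "{y. RL y x} \<subseteq> UNIV - {x}" using R_irrefl by blast
  then have "rank x \<le> card (UNIV - {x} :: 'a set)" unfolding rank_def by (rule card_mono[rotated]) simp
  also have "\<dots> < card (UNIV :: 'a set)" by (rule card_Diff1_less) simp_all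
  finally show ?thesis using card_UNIV by simp
qed

lemma rank_bij: "bij_betw rank UNIV {..<q^s}"
proof -
  have "rank ` UNIV \<subseteq> {..<q^s}" using rank_lt by auto
  moreover have "card (rank ` UNIV) = q ^ s" using card_image[OF rank_inj] card_UNIV by simp
  ultimately have "rank ` UNIV = {..<q^s}" by (simp add: card_subset_eq)
  then show ?thesis using rank_inj unfolding bij_betw_def by simp
qed

lemma rank_rho: assumes "m < q ^ s" shows "rank (rho e q \<gamma> s m) = m"
proof -
  have "\<exists>!x. rank x = m"
  proof -
    obtain x where "rank x = m" using rank_bij assms unfolding bij_betw_def by (metis lessThan_iff rangeE)
    then show ?thesis using rank_inj by (metis injD)
  qed
  then show ?thesis unfolding rho_def rank_def[symmetric] by (rule theI')
qed

lemma card_rho: "card {m. m < q ^ s \<and> P (rho e q \<gamma> s m)} = card {r. P r}"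
proof -
  have inj: "inj_on (rho e q \<gamma> s) {m. m < q ^ s \<and> P (rho e q \<gamma> s m)}"
    by (rule inj_onI) (metis (mono_tags, lifting) mem_Collect_eq rank_rho)
  have "rho e q \<gamma> s ` {m. m < q ^ s \<and> P (rho e q \<gamma> s m)} = {r. P r}"
  proof
    show "rho e q \<gamma> s ` {m. m < q ^ s \<and> P (rho e q \<gamma> s m)} \<subseteq> {r. P r}" by auto
    show "{r. P r} \<subseteq> rho e q \<gamma> s ` {m. m < q ^ s \<and> P (rho e q \<gamma> s m)}"
    proof
      fix r assume "r \<in> {r. P r}"
      have "rank (rho e q \<gamma> s (rank r)) = rank r" using rank_rho rank_lt by blast
      then have "rho e q \<gamma> s (rank r) = r" using rank_inj by (simp add: injD)
      then show "r \<in> rho e q \<gamma> s ` {m. m < q ^ s \<and> P (rho e q \<gamma> s m)}"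
        using \<open>r \<in> {r. P r}\<close> rank_lt by (metis (mono_tags, lifting) image_eqI mem_Collect_eq)
    qed
  qed
  then show ?thesis using card_image[OF inj] by simp
qed


lemma gpow0: "s \<le> i \<Longrightarrow> \<gamma> ^ i = 0"
proof -
  assume "s \<le> i"
  then have "\<gamma> ^ i = \<gamma> ^ s * \<gamma> ^ (i - s)" by (simp add: power_add[symmetric])
  then show ?thesis using nilp1 by simp
qed

lemma gj_evl: "\<gamma>^j * evl ds = (\<Sum>i<s. ds!i * \<gamma>^(i+j))"
  unfolding evl_def sum_distrib_left by (rule sum.cong) (simp_all add: power_add mult_ac)

lemma ann_card: assumes j: "j \<le> s" shows "card {z. \<gamma>^j * z = 0} = q^j"
proof -
  define A where "A = {ds \<in> L s. \<forall>i<s-j. ds!i = 0}"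
  have eq: "{z. \<gamma>^j * z = 0} = evl ` A"
  proof
    show "{z. \<gamma>^j * z = 0} \<subseteq> evl ` A"
    proof
      fix z assume "z \<in> {z. \<gamma>^j * z = 0}"
      then have z0: "\<gamma>^j * z = 0" by simp
      define ds where "ds = D z"
      have dsL: "ds \<in> L s" and ez: "evl ds = z" using D_props[of z] unfolding ds_def by auto
      have lds: "length ds = s" "set ds \<subseteq> T" using dsL unfolding L_def by auto
      have "(\<Sum>i<s. ds!i * \<gamma>^(i+j)) = (\<Sum>i<s-j. ds!i * \<gamma>^(i+j))"
      proof (rule sum.mono_neutral_right)
        show "\<forall>i\<in>{..<s} - {..<s - j}. ds ! i * \<gamma> ^ (i + j) = 0"
        proof
          fix i assume "i \<in> {..<s} - {..<s - j}"
          then have "s \<le> i + j" using j by auto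
          then show "ds ! i * \<gamma> ^ (i + j) = 0" using gpow0 by simp
        qed
      qed simp_all
      moreover have "(\<Sum>i<s. ds!i * \<gamma>^(i+j)) = 0" using z0 gj_evl[of j ds] unfolding ez by simp
      ultimately have s0: "(\<Sum>i<s-j. ds!i * \<gamma>^(i+j)) = 0" by simp
      have "\<forall>i<s-j. ds!i \<in> pideal \<gamma> \<longrightarrow> ds!i = 0"
      proof (intro allI impI)
        fix i assume i: "i < s - j" "ds!i \<in> pideal \<gamma>"
        have "ds!i \<in> set ds" using i(1) lds(1) by simp
        then have "ds!i \<in> T" using lds(2) by blast
        then show "ds!i = 0" using T_pideal i(2) by blast
      qed
      moreover have "s - j + j \<le> s" using j by simp
      ultimately have "\<forall>i<s-j. ds!i = 0" using U[of "s-j" j "\<lambda>i. ds!i"] s0 by blast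
      then have "ds \<in> A" using dsL unfolding A_def by blast
      then show "z \<in> evl ` A" using ez by blast
    qed
    show "evl ` A \<subseteq> {z. \<gamma>^j * z = 0}"
    proof
      fix z assume "z \<in> evl ` A"
      then obtain ds where ds: "ds \<in> A" "z = evl ds" by blast
      have dz: "\<forall>i<s-j. ds!i = 0" using ds(1) unfolding A_def by blast
      have "(\<Sum>i<s. ds!i * \<gamma>^(i+j)) = 0"
      proof (rule sum.neutral, rule ballI)
        fix i assume "i \<in> {..<s}"
        show "ds!i * \<gamma>^(i+j) = 0"
        proof (cases "i < s - j")
          case True then have "ds!i = 0" using dz by blast
          then show ?thesis by simp
        next
          case False then have "s \<le> i + j" by simp
          then have "\<gamma>^(i+j) = 0" by (rule gpow0)
          then show ?thesis by simp
        qed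
      qed
      then have "\<gamma>^j * z = 0" using gj_evl[of j ds] unfolding ds(2) by simp
      then show "z \<in> {z. \<gamma>^j * z = 0}" by simp
    qed
  qed
  have "inj_on evl A" using evl_inj unfolding A_def inj_on_def by blast
  then have c1: "card {z. \<gamma>^j * z = 0} = card A" using eq card_image by metis
  have "bij_betw (\<lambda>ts. replicate (s-j) 0 @ ts) (L j) A"
  proof (rule bij_betw_byWitness[where f' = "drop (s-j)"])
    show "\<forall>a\<in>L j. drop (s - j) (replicate (s - j) 0 @ a) = a" by simp
    show "\<forall>a'\<in>A. replicate (s - j) 0 @ drop (s - j) a' = a'"
    proof
      fix ds assume "ds \<in> A"
      then have "length ds = s" "\<forall>i<s-j. ds!i = 0" unfolding A_def L_def by auto
      then have "take (s-j) ds = replicate (s-j) 0" by (auto intro: nth_equalityI)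
      then show "replicate (s - j) 0 @ drop (s - j) ds = ds" by (metis append_take_drop_id)
    qed
    show "(\<lambda>ts. replicate (s - j) 0 @ ts) ` L j \<subseteq> A"
    proof
      fix x assume "x \<in> (\<lambda>ts. replicate (s - j) 0 @ ts) ` L j"
      then obtain ts where ts: "set ts \<subseteq> T" "length ts = j" "x = replicate (s - j) 0 @ ts"
        unfolding L_def by blast
      have "set x \<subseteq> T" using ts zero_T by (auto simp: set_replicate_conv_if)
      moreover have "length x = s" using ts j by simp
      moreover have "\<forall>i<s-j. x!i = 0" using ts by (simp add: nth_append)
      ultimately show "x \<in> A" unfolding A_def L_def by blast
    qed
    show "drop (s - j) ` A \<subseteq> L j"
    proof
      fix x assume "x \<in> drop (s - j) ` A"
      then obtain ds where ds: "ds \<in> L s" "x = drop (s - j) ds" unfolding A_def by blast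
      then have "set x \<subseteq> T" "length x = j" using j unfolding L_def by (auto dest: in_set_dropD)
      then show "x \<in> L j" unfolding L_def by blast
    qed
  qed
  then have "card A = card (L j)" by (simp add: bij_betw_same_card)
  then show ?thesis using c1 card_L by simp
qed

lemma fiber_card: assumes j: "j \<le> s" and x: "x \<in> pideal (\<gamma>^j)"
  shows "card {r. \<gamma>^j * r = x} = q^j"
proof -
  obtain y where y: "x = \<gamma>^j * y" using x unfolding pideal_def by blast
  have "{r. \<gamma>^j * r = x} = (\<lambda>z. z + y) ` {z. \<gamma>^j * z = 0}"
  proof
    show "{r. \<gamma>^j * r = x} \<subseteq> (\<lambda>z. z + y) ` {z. \<gamma>^j * z = 0}"
    proof
      fix r assume "r \<in> {r. \<gamma>^j * r = x}"
      then have "\<gamma>^j * (r - y) = 0" using y by (simp add: right_diff_distrib)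
      then show "r \<in> (\<lambda>z. z + y) ` {z. \<gamma>^j * z = 0}" by (intro image_eqI[of _ _ "r - y"]) simp_all
    qed
    show "(\<lambda>z. z + y) ` {z. \<gamma>^j * z = 0} \<subseteq> {r. \<gamma>^j * r = x}"
      using y by (auto simp: distrib_left)
  qed
  moreover have "inj_on (\<lambda>z. z + y) {z. \<gamma>^j * z = 0}" by (rule inj_onI) simp
  ultimately show ?thesis using card_image ann_card[OF j] by metis
qed

end

theorem lemma3p6:
  fixes \<gamma> :: "'a::{comm_ring_1,finite}"
    and s q :: nat
    and e :: "nat \<Rightarrow> 'a"
    and k i j :: nat
  assumes chain: "chain_ring TYPE('a)"
    and maxl: "maximal_ideal (pideal \<gamma>)"
    and nilp: "\<gamma> ^ s = 0" "\<forall>t<s. \<gamma> ^ t \<noteq> 0"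
    and e_inj: "inj_on e {..<q}"
    and reps: "\<forall>x. \<exists>!t. t \<in> e ` {..<q} \<and> x - t \<in> pideal \<gamma>"
    and e01: "e 0 = 0" "e 1 = 1"
    and k: "k \<ge> 1"
    and i: "1 \<le> i" "i \<le> k"
    and j: "j < s"
  shows "\<forall>x \<in> pideal (\<gamma> ^ j).
           card {c. c < q ^ (s * k) \<and> \<gamma> ^ j * Gmat (rho e q \<gamma> s) (q ^ s) k i c = x}
             = q ^ (j + s * (k - 1))"
proof
  fix x assume x: "x \<in> pideal (\<gamma> ^ j)"
  interpret cr \<gamma> s q e using chain maxl nilp e_inj reps e01(1) by unfold_locales
  have N: "q ^ s > 0" using q_pos by simp
  have "card {c. c < q ^ (s * k) \<and> \<gamma> ^ j * Gmat (rho e q \<gamma> s) (q ^ s) k i c = x}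
      = card {c. c < (q ^ s) ^ k \<and> (\<lambda>v. \<gamma> ^ j * v = x) (Gmat (rho e q \<gamma> s) (q ^ s) k i c)}"
    by (simp add: power_mult)
  also have "\<dots> = (q ^ s) ^ (k - 1) * card {m. m < q ^ s \<and> \<gamma> ^ j * rho e q \<gamma> s m = x}"
    using Gmat_count[OF N k i] by simp
  also have "\<dots> = (q ^ s) ^ (k - 1) * q ^ j"
    using card_rho[of "\<lambda>v. \<gamma> ^ j * v = x"] fiber_card[of j x] j x by simp
  also have "\<dots> = q ^ (j + s * (k - 1))" by (simp add: power_add power_mult)
  finally show "card {c. c < q ^ (s * k) \<and> \<gamma> ^ j * Gmat (rho e q \<gamma> s) (q ^ s) k i c = x}
             = q ^ (j + s * (k - 1))" .
qed

end
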